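(* Consider $\min_{\beta\in\mathbb{R}^p}\Phi(\beta)=f(\beta)+\sum_{j=1}^p g_j(\beta_j)$ with $f(\beta)=F(X\beta)$ for some $X\in\mathbb{R}^{n\times p}$. Suppose: (1) $f:\mathbb{R}^p\to\mathbb{R}$ is convex and differentiable and for each $j$ there is $L_j>0$ with $|\nabla_j f(x+he_j)-\nabla_j f(x)|\le L_j|h|$ for all $x\in\mathbb{R}^p,h\in\mathbb{R}$; each $g_j:\mathbb{R}\to\mathbb{R}$ is proper, closed and lower bounded; $\Phi$ admits at least one critical point; and for every $j$, $g_j/L_j$ is $\alpha$-semi-convex for some $\alpha<1$, i.e. $g_j/L_j+\frac{\alpha}{2}(\cdot)^2$ is convex. (2) The sequence $(\beta^{(k)})_{k\ge0}$ generated by cyclic proximal coordinate descent converges toward a critical point $\hat\beta$. (3) $\hat\beta$ is non-degenerate: for all $j\notin\mathcal{S}:=\mathrm{gsupp}(\hat\beta)$, $-\nabla_j f(\hat\beta)\in\mathrm{interior}(\partial g_j(\hat\beta_j))$. Then there exists $K>0$ such that for all $k\ge K$, $\beta^{(k)}_{\mathcal{S}^c}=\hat\beta_{\mathcal{S}^c}$.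
   Context: $\partial$ denotes the Fréchet subdifferential; with $g(\beta)=\sum_j g_j(\beta_j)$, a critical point of $\Phi$ is a point $x$ with $-\nabla f(x)\in\partial g(x)$. The generalized support is $\mathrm{gsupp}(\beta)=\{j\in[p]:\partial g_j(\beta_j)\text{ is a singleton}\}$, and $\mathcal{S}^c=[p]\setminus\mathcal{S}$. Cyclic proximal coordinate descent: starting from $\beta^{(0)}$, an epoch $k\to k+1$ updates successively for $j=1,\dots,p$ the $j$-th coordinate of the current point $\beta$ by $\beta_j\leftarrow\mathrm{prox}_{g_j/L_j}\big(\beta_j-\frac{1}{L_j}\nabla_j f(\beta)\big)$, where $\mathrm{prox}_{h}(z)=\arg\min_u \frac12(u-z)^2+h(u)$ (single-valued under the semi-convexity assumption); $\beta^{(k)}$ is the point after $k$ epochs. *)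

theory Defs
  imports "HOL-Analysis.Analysis"
begin

definition partial_deriv :: "(real^'p \<Rightarrow> real) \<Rightarrow> 'p \<Rightarrow> real^'p \<Rightarrow> real" where
  "partial_deriv f j x = deriv (\<lambda>t. f (x + t *\<^sub>R axis j 1)) 0"

definition grad :: "(real^'p \<Rightarrow> real) \<Rightarrow> real^'p \<Rightarrow> real^'p" where
  "grad f x = (\<chi> j. partial_deriv f j x)"

text \<open>Frechet (regular) subdifferential: v is a Frechet subgradient of h at x iff
  liminf_{y -> x, y ~= x} (h y - h x - <v, y - x>) / |y - x| >= 0.\<close>
definition frechet_subdiff :: "('a::real_inner \<Rightarrow> real) \<Rightarrow> 'a \<Rightarrow> 'a set" where
  "frechet_subdiff h x = {v. \<forall>e>0. \<exists>d>0. \<forall>y. dist y x < d \<longrightarrow>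
       h y \<ge> h x + inner v (y - x) - e * norm (y - x)}"

definition closed_fun :: "(real \<Rightarrow> real) \<Rightarrow> bool" where
  "closed_fun h \<longleftrightarrow> closed {(x, t). h x \<le> t}"

definition semiconvex :: "real \<Rightarrow> (real \<Rightarrow> real) \<Rightarrow> bool" where
  "semiconvex \<alpha> h \<longleftrightarrow> convex_on UNIV (\<lambda>u. h u + \<alpha> / 2 * u\<^sup>2)"

text \<open>Proximal operator (single-valued under the semi-convexity assumption).\<close>
definition prox :: "(real \<Rightarrow> real) \<Rightarrow> real \<Rightarrow> real" where
  "prox h z = (THE u. \<forall>v. (u - z)\<^sup>2 / 2 + h u \<le> (v - z)\<^sup>2 / 2 + h v)"

definition cd_update :: "(real^'p \<Rightarrow> real) \<Rightarrow> ('p \<Rightarrow> real \<Rightarrow> real) \<Rightarrow> ('p \<Rightarrow> real)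
    \<Rightarrow> 'p \<Rightarrow> real^'p \<Rightarrow> real^'p" where
  "cd_update f g L j b =
     (\<chi> i. if i = j then prox (\<lambda>u. g j u / L j) (b $ j - partial_deriv f j b / L j) else b $ i)"

definition cd_epoch :: "(real^'p \<Rightarrow> real) \<Rightarrow> ('p \<Rightarrow> real \<Rightarrow> real) \<Rightarrow> ('p \<Rightarrow> real)
    \<Rightarrow> 'p list \<Rightarrow> real^'p \<Rightarrow> real^'p" where
  "cd_epoch f g L js b = fold (cd_update f g L) js b"

definition cd_iter :: "(real^'p \<Rightarrow> real) \<Rightarrow> ('p \<Rightarrow> real \<Rightarrow> real) \<Rightarrow> ('p \<Rightarrow> real)
    \<Rightarrow> 'p list \<Rightarrow> real^'p \<Rightarrow> nat \<Rightarrow> real^'p" where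
  "cd_iter f g L js b0 k = (cd_epoch f g L js ^^ k) b0"

definition critical_point :: "(real^'p \<Rightarrow> real) \<Rightarrow> ('p \<Rightarrow> real \<Rightarrow> real) \<Rightarrow> real^'p \<Rightarrow> bool" where
  "critical_point f g x \<longleftrightarrow> - grad f x \<in> frechet_subdiff (\<lambda>b. \<Sum>j\<in>UNIV. g j (b $ j)) x"

definition gsupp :: "('p \<Rightarrow> real \<Rightarrow> real) \<Rightarrow> real^'p \<Rightarrow> 'p set" where
  "gsupp g b = {j. \<exists>v. frechet_subdiff (g j) (b $ j) = {v}}"

end

theory Submission
  imports Defs
begin

lemma prox_at:
  fixes G :: "real \<Rightarrow> real" and L \<alpha> x v :: real
  assumes L: "L > 0" and al: "\<alpha> < 1"
    and cv: "convex_on UNIV (\<lambda>u. G u / L + \<alpha> / 2 * u\<^sup>2)"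
    and sd: "v \<in> frechet_subdiff G x"
  shows "prox (\<lambda>u. G u / L) (x + v / L) = x"
proof -
  define z where "z = x + v / L"
  define \<phi> where "\<phi> w = (w - z)\<^sup>2 / 2 + G w / L" for w
  define a where "a = (1 - \<alpha>) / 2"
  have a: "a > 0" using al by (simp add: a_def)
  have strict: "\<phi> y > \<phi> x" if yx: "y \<noteq> x" for y
  proof -
    define c where "c = \<bar>y - x\<bar>"
    have c: "c > 0" using yx by (simp add: c_def)
    have "L * a * c / 4 > 0" using L a c by simp
    then obtain d where d: "d > 0" and dd: "\<And>w. dist w x < d \<Longrightarrow>
        G w \<ge> G x + inner v (w - x) - (L * a * c / 4) * norm (w - x)"
      using sd unfolding frechet_subdiff_def by blast
    define t where "t = min (1/2) (d / (2 * c))"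
    have t0: "t > 0" and t1: "t \<le> 1/2" using d c by (auto simp: t_def)
    have tc: "t * c < d"
    proof -
      have "t * c \<le> d / (2 * c) * c" using c by (intro mult_right_mono) (auto simp: t_def)
      also have "\<dots> = d / 2" using c by simp
      finally show ?thesis using d by simp
    qed
    define w where "w = (1 - t) * x + t * y"
    have wx: "w - x = t * (y - x)" by (simp add: w_def algebra_simps)
    have nw: "\<bar>w - x\<bar> = t * c" using t0 by (simp add: wx abs_mult c_def)
    have Gw: "G w \<ge> G x + v * (w - x) - (L * a * c / 4) * (t * c)"
      using dd[of w] nw tc by (simp add: dist_real_def)
    have lower: "\<phi> w \<ge> \<phi> x - a * c / 4 * (t * c)"
    proof -
      have "(w - z)\<^sup>2 / 2 - (x - z)\<^sup>2 / 2 \<ge> (w - x) * (x - z)"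
      proof -
        have "(w - z)\<^sup>2 / 2 - (x - z)\<^sup>2 / 2 = (w - x) * (x - z) + (w - x)\<^sup>2 / 2"
          by (simp add: power2_eq_square field_simps)
        thus ?thesis by (simp add: zero_le_power2)
      qed
      moreover have "(w - x) * (x - z) = - (v * (w - x) / L)" by (simp add: z_def field_simps)
      moreover have "G w / L \<ge> G x / L + v * (w - x) / L - a * c / 4 * (t * c)"
      proof -
        have "G w / L \<ge> (G x + v * (w - x) - (L * a * c / 4) * (t * c)) / L"
          using Gw L by (simp add: divide_right_mono)
        also have "(G x + v * (w - x) - (L * a * c / 4) * (t * c)) / L
             = G x / L + v * (w - x) / L - a * c / 4 * (t * c)" using L by (simp add: field_simps)
        finally show ?thesis .
      qed
      ultimately show ?thesis unfolding \<phi>_def by linarith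
    qed
    have upper: "\<phi> w \<le> (1 - t) * \<phi> x + t * \<phi> y - a * t * (1 - t) * c\<^sup>2"
    proof -
      define \<psi> where "\<psi> u = G u / L + \<alpha> / 2 * u\<^sup>2" for u
      define r where "r u = (u - z)\<^sup>2 / 2 - \<alpha> / 2 * u\<^sup>2" for u
      have ph: "\<phi> u = \<psi> u + r u" for u by (simp add: \<phi>_def \<psi>_def r_def)
      have c1: "\<psi> w \<le> (1 - t) * \<psi> x + t * \<psi> y"
        using convex_onD[OF cv, of t x y] t0 t1 by (simp add: w_def \<psi>_def)
      have c2: "c\<^sup>2 = (y - x)\<^sup>2" by (simp add: c_def)
      have r: "r w = (1 - t) * r x + t * r y - a * t * (1 - t) * c\<^sup>2"
        unfolding r_def c2 a_def w_def by (simp add: power2_eq_square field_simps)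
      have "(1 - t) * \<phi> x + t * \<phi> y = ((1 - t) * \<psi> x + t * \<psi> y) + ((1 - t) * r x + t * r y)"
        by (simp add: ph algebra_simps)
      thus ?thesis using c1 r ph[of w] by linarith
    qed
    have "t * (\<phi> y - \<phi> x) \<ge> t * (a * (1 - t) * c\<^sup>2 - a * c / 4 * c)"
      using lower upper by (simp add: algebra_simps power2_eq_square)
    hence "\<phi> y - \<phi> x \<ge> a * (1 - t) * c\<^sup>2 - a * c / 4 * c" using t0 by simp
    moreover have "a * (1 - t) * c\<^sup>2 \<ge> a * (1/2) * c\<^sup>2"
      using a t1 by (intro mult_right_mono mult_left_mono) auto
    moreover have "a * c / 4 * c < a * (1/2) * c\<^sup>2" using a c by (simp add: power2_eq_square)
    ultimately show ?thesis by linarith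
  qed
  show ?thesis
    unfolding prox_def z_def[symmetric]
  proof (rule the_equality)
    show "\<forall>u. (x - z)\<^sup>2 / 2 + G x / L \<le> (u - z)\<^sup>2 / 2 + G u / L"
      using strict unfolding \<phi>_def by (metis order_le_less order_refl)
  next
    fix u assume "\<forall>w. (u - z)\<^sup>2 / 2 + G u / L \<le> (w - z)\<^sup>2 / 2 + G w / L"
    hence "\<phi> u \<le> \<phi> x" unfolding \<phi>_def by blast
    thus "u = x" using strict by force
  qed
qed

lemma fold_other:
  "m \<notin> set Q \<Longrightarrow> fold (cd_update f g L) Q c $ m = c $ m"
  by (induction Q arbitrary: c) (auto simp: cd_update_def)

lemma pd_deriv:
  fixes f :: "real^'p \<Rightarrow> real"
  assumes "f differentiable (at (b + 0 *\<^sub>R axis j 1))"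
  shows "((\<lambda>t. f (b + t *\<^sub>R axis j 1)) has_real_derivative partial_deriv f j b) (at 0)"
proof -
  have "(\<lambda>t::real. b + t *\<^sub>R axis j (1::real)) differentiable at 0"
    by (intro derivative_intros)
  hence "(f \<circ> (\<lambda>t::real. b + t *\<^sub>R axis j (1::real))) differentiable at 0"
    using assms by (intro differentiable_chain_at) auto
  hence "(\<lambda>t. f (b + t *\<^sub>R axis j 1)) differentiable at 0" by (simp add: o_def)
  thus ?thesis unfolding partial_deriv_def
    using DERIV_deriv_iff_real_differentiable by blast
qed

lemma pd_tangent:
  fixes f :: "real^'p \<Rightarrow> real"
  assumes cv: "convex_on UNIV f" and d: "\<And>x. f differentiable (at x)"
  shows "partial_deriv f j b * t \<le> f (b + t *\<^sub>R axis j 1) - f b"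
proof -
  have cv1: "convex_on UNIV (\<lambda>t. f (b + t *\<^sub>R axis j 1))"
  proof (rule convex_onI)
    fix s u v :: real assume "0 < v" "v < 1"
    hence "f ((1 - v) *\<^sub>R (b + s *\<^sub>R axis j 1) + v *\<^sub>R (b + u *\<^sub>R axis j 1))
        \<le> (1 - v) * f (b + s *\<^sub>R axis j 1) + v * f (b + u *\<^sub>R axis j 1)"
      by (intro convex_onD[OF cv]) auto
    moreover have "(1 - v) *\<^sub>R (b + s *\<^sub>R axis j 1) + v *\<^sub>R (b + u *\<^sub>R axis j 1)
        = b + ((1 - v) *\<^sub>R s + v *\<^sub>R u) *\<^sub>R axis j (1::real)"
      by (simp add: algebra_simps)
    ultimately show "f (b + ((1 - v) *\<^sub>R s + v *\<^sub>R u) *\<^sub>R axis j 1)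
        \<le> (1 - v) * f (b + s *\<^sub>R axis j 1) + v * f (b + u *\<^sub>R axis j 1)" by simp
  qed simp
  have "f (b + t *\<^sub>R axis j 1) - f (b + 0 *\<^sub>R axis j 1) \<ge> partial_deriv f j b * (t - 0)"
    by (rule convex_on_imp_above_tangent[OF cv1]) (auto intro: pd_deriv d)
  thus ?thesis by simp
qed

lemma pd_tendsto:
  fixes f :: "real^'p \<Rightarrow> real"
  assumes cv: "convex_on UNIV f" and d: "\<And>x. f differentiable (at x)"
    and y: "y \<longlonglongrightarrow> x"
  shows "(\<lambda>k. partial_deriv f j (y k)) \<longlonglongrightarrow> partial_deriv f j x"
proof -
  define a where "a = axis j (1::real)"
  define Q where "Q b t = (f (b + t *\<^sub>R a) - f b) / t" for b t
  have cont: "isCont f z" for z using d differentiable_imp_continuous_within by blast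
  have Qt: "(\<lambda>k. Q (y k) t) \<longlonglongrightarrow> Q x t" if t0: "t \<noteq> 0" for t
  proof -
    have "(\<lambda>k. f (y k + t *\<^sub>R a)) \<longlonglongrightarrow> f (x + t *\<^sub>R a)"
      by (rule isCont_tendsto_compose[OF cont]) (intro tendsto_intros y)
    moreover have "(\<lambda>k. f (y k)) \<longlonglongrightarrow> f x"
      by (rule isCont_tendsto_compose[OF cont y])
    ultimately show ?thesis unfolding Q_def using t0 by (intro tendsto_intros)
  qed
  have up: "partial_deriv f j b \<le> Q b t" if "t > 0" for b t
    using pd_tangent[OF cv d, of j b t] that by (simp add: Q_def a_def pos_le_divide_eq)
  have lo: "partial_deriv f j b \<ge> Q b t" if "t < 0" for b t
    using pd_tangent[OF cv d, of j b t] that by (simp add: Q_def a_def neg_divide_le_eq)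
  have D: "((\<lambda>t. (f (x + t *\<^sub>R a) - f (x + 0 *\<^sub>R a)) / (t - 0)) \<longlongrightarrow> partial_deriv f j x) (at 0)"
    using pd_deriv[of f x j, OF d] unfolding has_field_derivative_iff a_def by simp
  hence D': "(Q x \<longlongrightarrow> partial_deriv f j x) (at 0)"
    by (simp add: Q_def[abs_def])
  show ?thesis
  proof (rule order_tendstoI)
    fix ub assume ub: "ub > partial_deriv f j x"
    have "eventually (\<lambda>t. Q x t < ub) (at 0)" using order_tendstoD(2)[OF D' ub] .
    then obtain dd where dd: "dd > 0" "\<And>t. t \<noteq> 0 \<Longrightarrow> dist t 0 < dd \<Longrightarrow> Q x t < ub"
      unfolding eventually_at by blast
    have q: "Q x (dd/2) < ub" using dd by simp
    have ev: "eventually (\<lambda>k. Q (y k) (dd/2) < ub) sequentially"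
    proof -
      have "(\<lambda>k. Q (y k) (dd/2)) \<longlonglongrightarrow> Q x (dd/2)" using dd by (intro Qt) simp
      from order_tendstoD(2)[OF this q] show ?thesis .
    qed
    have u: "\<And>k. partial_deriv f j (y k) \<le> Q (y k) (dd/2)" using dd by (intro up) simp
    from ev show "eventually (\<lambda>k. partial_deriv f j (y k) < ub) sequentially"
      by (rule eventually_mono) (metis u le_less_trans)
  next
    fix lb assume lb: "lb < partial_deriv f j x"
    have "eventually (\<lambda>t. Q x t > lb) (at 0)" using order_tendstoD(1)[OF D' lb] .
    then obtain dd where dd: "dd > 0" "\<And>t. t \<noteq> 0 \<Longrightarrow> dist t 0 < dd \<Longrightarrow> Q x t > lb"
      unfolding eventually_at by blast
    have q: "Q x (-dd/2) > lb" using dd by simp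
    have ev: "eventually (\<lambda>k. Q (y k) (-dd/2) > lb) sequentially"
    proof -
      have "(\<lambda>k. Q (y k) (-dd/2)) \<longlonglongrightarrow> Q x (-dd/2)" using dd by (intro Qt) simp
      from order_tendstoD(1)[OF this q] show ?thesis .
    qed
    have u: "\<And>k. partial_deriv f j (y k) \<ge> Q (y k) (-dd/2)" using dd by (intro lo) simp
    from ev show "eventually (\<lambda>k. partial_deriv f j (y k) > lb) sequentially"
      by (rule eventually_mono) (metis u less_le_trans)
  qed
qed

theorem proposition3:
  fixes F :: "real^'n \<Rightarrow> real" and X :: "real^'p^'n"
    and f :: "real^'p \<Rightarrow> real" and g :: "'p \<Rightarrow> real \<Rightarrow> real"
    and L :: "'p \<Rightarrow> real" and \<alpha> :: real
    and js :: "'p list" and beta0 beta_hat :: "real^'p"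
  assumes f_def: "f = (\<lambda>b. F (X *v b))"
    and f_convex: "convex_on UNIV f"
    and f_diff: "\<And>x. f differentiable (at x)"
    and L_pos: "\<And>j. L j > 0"
    and f_coord_lip: "\<And>j x h. \<bar>partial_deriv f j (x + h *\<^sub>R axis j 1) - partial_deriv f j x\<bar> \<le> L j * \<bar>h\<bar>"
    and g_closed: "\<And>j. closed_fun (g j)"
    and g_lb: "\<And>j. bdd_below (range (g j))"
    and crit_exists: "\<exists>x. critical_point f g x"
    and alpha_lt: "\<alpha> < 1"
    and g_semiconv: "\<And>j. semiconvex \<alpha> (\<lambda>u. g j u / L j)"
    and js_order: "distinct js" "set js = UNIV"
    and conv: "cd_iter f g L js beta0 \<longlonglongrightarrow> beta_hat"
    and hat_crit: "critical_point f g beta_hat"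
    and nondegen: "\<And>j. j \<notin> gsupp g beta_hat \<Longrightarrow>
        - partial_deriv f j beta_hat \<in> interior (frechet_subdiff (g j) (beta_hat $ j))"
  shows "\<exists>K>0. \<forall>k\<ge>K. \<forall>j. j \<notin> gsupp g beta_hat \<longrightarrow> cd_iter f g L js beta0 k $ j = beta_hat $ j"
proof -
  define \<beta> where "\<beta> = cd_iter f g L js beta0"
  have step: "\<beta> (Suc k) = fold (cd_update f g L) js (\<beta> k)" for k
    by (simp add: \<beta>_def cd_iter_def cd_epoch_def)
  have conv': "\<beta> \<longlonglongrightarrow> beta_hat" using conv by (simp add: \<beta>_def)
  have ev1: "eventually (\<lambda>k. j \<notin> gsupp g beta_hat \<longrightarrow> \<beta> (Suc k) $ j = beta_hat $ j) sequentially" for j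
  proof (cases "j \<in> gsupp g beta_hat")
    case True thus ?thesis by simp
  next
    case jS: False
    have "j \<in> set js" using js_order by simp
    then obtain i where i: "i < length js" "js ! i = j" by (auto simp: in_set_conv_nth)
    define P where "P = take i js"
    define Q where "Q = drop (Suc i) js"
    have js: "js = P @ j # Q" unfolding P_def Q_def using i id_take_nth_drop by metis
    have dj: "j \<notin> set P" "j \<notin> set Q" "set P \<inter> set Q = {}"
      using js_order(1) by (subst (asm) js; auto)+
    define b where "b k = fold (cd_update f g L) P (\<beta> k)" for k
    have bs: "\<beta> (Suc k) = fold (cd_update f g L) Q (cd_update f g L j (b k))" for k
      by (simp add: step b_def js)
    have bj: "\<beta> (Suc k) $ j = prox (\<lambda>u. g j u / L j) (b k $ j - partial_deriv f j (b k) / L j)" for k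
      using dj(2) by (simp add: bs fold_other cd_update_def)
    have bm: "b k $ m = (if m \<in> set P then \<beta> (Suc k) $ m else \<beta> k $ m)" for k m
    proof (cases "m \<in> set P")
      case True
      hence "m \<notin> set Q" "m \<noteq> j" using dj by auto
      thus ?thesis using True by (simp add: bs fold_other cd_update_def)
    next
      case False thus ?thesis by (simp add: b_def fold_other)
    qed
    have bconv: "b \<longlonglongrightarrow> beta_hat"
    proof (rule vec_tendstoI)
      fix m
      have c0: "(\<lambda>k. \<beta> k $ m) \<longlonglongrightarrow> beta_hat $ m" using conv' by (rule tendsto_vec_nth)
      hence c1: "(\<lambda>k. \<beta> (Suc k) $ m) \<longlonglongrightarrow> beta_hat $ m" by (rule LIMSEQ_Suc)
      show "(\<lambda>k. b k $ m) \<longlonglongrightarrow> beta_hat $ m"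
        by (cases "m \<in> set P") (simp_all add: bm c0 c1)
    qed
    have pdc: "(\<lambda>k. partial_deriv f j (b k)) \<longlonglongrightarrow> partial_deriv f j beta_hat"
      by (rule pd_tendsto[OF f_convex f_diff bconv])
    define v where "v k = L j * (b k $ j - beta_hat $ j) - partial_deriv f j (b k)" for k
    have "v \<longlonglongrightarrow> L j * (beta_hat $ j - beta_hat $ j) - partial_deriv f j beta_hat"
      unfolding v_def[abs_def] by (intro tendsto_intros bconv pdc)
    hence vc: "v \<longlonglongrightarrow> - partial_deriv f j beta_hat" by simp
    have "eventually (\<lambda>k. v k \<in> interior (frechet_subdiff (g j) (beta_hat $ j))) sequentially"
      by (rule topological_tendstoD[OF vc open_interior nondegen[OF jS]])
    thus ?thesis
    proof (rule eventually_mono)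
      fix k assume "v k \<in> interior (frechet_subdiff (g j) (beta_hat $ j))"
      hence vs: "v k \<in> frechet_subdiff (g j) (beta_hat $ j)" using interior_subset by blast
      have Lj: "L j > 0" by (rule L_pos)
      have eq: "b k $ j - partial_deriv f j (b k) / L j = beta_hat $ j + v k / L j"
        using Lj by (simp add: v_def field_simps)
      have cvx: "convex_on UNIV (\<lambda>u. g j u / L j + \<alpha> / 2 * u\<^sup>2)"
        using g_semiconv[of j] by (simp add: semiconvex_def)
      show "j \<notin> gsupp g beta_hat \<longrightarrow> \<beta> (Suc k) $ j = beta_hat $ j"
        using prox_at[OF Lj alpha_lt cvx vs] by (simp add: bj eq)
    qed
  qed
  have "eventually (\<lambda>k. \<forall>j. j \<notin> gsupp g beta_hat \<longrightarrow> \<beta> (Suc k) $ j = beta_hat $ j) sequentially"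
    by (rule eventually_all_finite) (rule ev1)
  then obtain N where N: "\<And>k. k \<ge> N \<Longrightarrow> \<forall>j. j \<notin> gsupp g beta_hat \<longrightarrow> \<beta> (Suc k) $ j = beta_hat $ j"
    unfolding eventually_sequentially by blast
  show ?thesis
  proof (intro exI[of _ "Suc N"] conjI allI impI)
    fix k j assume k: "Suc N \<le> k" and j: "j \<notin> gsupp g beta_hat"
    then obtain k' where k': "k = Suc k'" "k' \<ge> N" by (cases k) auto
    show "cd_iter f g L js beta0 k $ j = beta_hat $ j"
      using N[OF k'(2)] j by (simp add: k'(1) \<beta>_def)
  qed simp
qed

end
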